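(* For every integer $g \geq 1$, the matching number (the maximum cardinality of a matching) of the graph $\mathcal{F}_g$ is $\frac{4^g+8}{6}$.
   Context: The graphs $\mathcal{F}_g$, $g\ge 1$, are defined recursively. $\mathcal{F}_1$ is the 4-cycle (quadrangle). For $g>1$, $\mathcal{F}_g$ is obtained from $\mathcal{F}_{g-1}$ by replacing every edge $\{v_i,v_j\}$ of $\mathcal{F}_{g-1}$ by a quadrangle in which $v_i$ and $v_j$ are diagonal vertices: the edge $\{v_i,v_j\}$ is deleted, two new vertices $w,w'$ are added, and the four edges $\{v_i,w\},\{w,v_j\},\{v_i,w'\},\{w',v_j\}$ are added. Thus $\mathcal{F}_g$ has $\frac{2}{3}(4^g+2)$ vertices and $4^g$ edges. A matching is a set of edges no two of which share a vertex. *)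

theory Defs
  imports Complex_Main
begin

text \<open>Vertices: the four vertices of the initial quadrangle are V 0..V 3; when an edge
  stored as the pair (u,v) is replaced by a quadrangle, the two new vertices are
  W u v False and W u v True (fresh, since each edge is stored exactly once).\<close>
datatype vtx = V nat | W vtx vtx bool

text \<open>Oriented edge list: FE 0 is F_1 (the 4-cycle), FE (Suc n) is obtained from FE n by
  replacing every edge (u,v) by the quadrangle u - w - v - w' - u.\<close>
fun FE :: "nat \<Rightarrow> (vtx \<times> vtx) set" where
  "FE 0 = {(V 0, V 1), (V 1, V 2), (V 2, V 3), (V 3, V 0)}"
| "FE (Suc n) = (\<Union>(u, v) \<in> FE n. \<Union>b \<in> UNIV.
      {(u, W u v b), (W u v b, v)})"

definition F :: "nat \<Rightarrow> vtx set set" where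
  "F g = (\<lambda>(u, v). {u, v}) ` FE (g - 1)"

definition is_matching :: "'a set set \<Rightarrow> 'a set set \<Rightarrow> bool" where
  "is_matching E M \<longleftrightarrow> M \<subseteq> E \<and> (\<forall>e1\<in>M. \<forall>e2\<in>M. e1 \<noteq> e2 \<longrightarrow> e1 \<inter> e2 = {})"

definition matching_number :: "'a set set \<Rightarrow> nat" where
  "matching_number E = Max (card ` {M. is_matching E M})"

end

theory Submission
  imports Defs
begin

fun depth :: "vtx \<Rightarrow> nat" where
  "depth (V k) = 0"
| "depth (W u v b) = Suc (max (depth u) (depth v))"

lemma FE_Suc_iff: "p \<in> FE (Suc n) \<longleftrightarrow> (\<exists>u v b. (u,v) \<in> FE n \<and> (p = (u, W u v b) \<or> p = (W u v b, v)))"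
  by auto

declare FE.simps(2)[simp del]

lemma FE_depth: "(u, v) \<in> FE n \<Longrightarrow> max (depth u) (depth v) = n"
proof (induction n arbitrary: u v)
  case 0
  then show ?case by auto
next
  case (Suc n)
  then show ?case unfolding FE_Suc_iff by fastforce
qed

definition Vs :: "nat \<Rightarrow> vtx set" where
  "Vs n = fst ` FE n \<union> snd ` FE n"

lemma Vs_iff: "x \<in> Vs n \<longleftrightarrow> (\<exists>y. (x, y) \<in> FE n \<or> (y, x) \<in> FE n)"
  unfolding Vs_def by force

lemma Vs_depth: "x \<in> Vs n \<Longrightarrow> depth x \<le> n"
  unfolding Vs_iff using FE_depth by fastforce

fun fA :: "(vtx \<times> vtx) \<times> bool \<Rightarrow> vtx \<times> vtx" where
  "fA ((u, v), b) = (u, W u v b)"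
fun fB :: "(vtx \<times> vtx) \<times> bool \<Rightarrow> vtx \<times> vtx" where
  "fB ((u, v), b) = (W u v b, v)"
fun fN :: "(vtx \<times> vtx) \<times> bool \<Rightarrow> vtx" where
  "fN ((u, v), b) = W u v b"

definition NW :: "nat \<Rightarrow> vtx set" where
  "NW n = fN ` (FE n \<times> UNIV)"

lemma NW_iff: "x \<in> NW n \<longleftrightarrow> (\<exists>u v b. (u,v) \<in> FE n \<and> x = W u v b)"
proof
  assume "x \<in> NW n"
  then obtain p where "p \<in> FE n \<times> UNIV" "x = fN p" unfolding NW_def by auto
  then show "\<exists>u v b. (u,v) \<in> FE n \<and> x = W u v b" by (cases p) auto
next
  assume "\<exists>u v b. (u,v) \<in> FE n \<and> x = W u v b"
  then obtain u v b where "(u,v) \<in> FE n" "x = W u v b" by auto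
  then show "x \<in> NW n" unfolding NW_def by (intro image_eqI[of _ _ "((u,v),b)"]) auto
qed

lemma FE_Suc_split: "FE (Suc n) = fA ` (FE n \<times> UNIV) \<union> fB ` (FE n \<times> UNIV)"
  (is "_ = ?A \<union> ?B")
proof
  show "FE (Suc n) \<subseteq> ?A \<union> ?B"
  proof
    fix x assume "x \<in> FE (Suc n)"
    then obtain u v b where uv: "(u,v) \<in> FE n" "x = (u, W u v b) \<or> x = (W u v b, v)" unfolding FE_Suc_iff by blast
    have mem: "((u,v),b) \<in> FE n \<times> UNIV" using uv by simp
    from uv(2) show "x \<in> ?A \<union> ?B"
    proof (elim disjE)
      assume x: "x = (u, W u v b)"
      have "x \<in> ?A" by (rule image_eqI[OF _ mem]) (simp add: x)
      then show ?thesis by blast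
    next
      assume x: "x = (W u v b, v)"
      have "x \<in> ?B" by (rule image_eqI[OF _ mem]) (simp add: x)
      then show ?thesis by blast
    qed
  qed
  show "?A \<union> ?B \<subseteq> FE (Suc n)"
  proof
    fix x assume "x \<in> ?A \<union> ?B"
    then obtain p where p: "p \<in> FE n \<times> UNIV" "x = fA p \<or> x = fB p" by auto
    obtain u v b where "p = ((u,v),b)" by (metis prod.exhaust)
    then show "x \<in> FE (Suc n)" using p unfolding FE_Suc_iff by auto
  qed
qed

lemma snd_img: "x \<in> snd ` S \<longleftrightarrow> (\<exists>y. (y, x) \<in> S)" by force
lemma fst_img: "x \<in> fst ` S \<longleftrightarrow> (\<exists>y. (x, y) \<in> S)" by force

lemma snd_FE_Suc: "snd ` FE (Suc n) = NW n \<union> snd ` FE n"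
proof -
  have "x \<in> snd ` FE (Suc n) \<longleftrightarrow> x \<in> NW n \<union> snd ` FE n" for x
  proof -
    have "x \<in> snd ` FE (Suc n) \<longleftrightarrow> (\<exists>y. (y, x) \<in> FE (Suc n))" by (rule snd_img)
    also have "\<dots> \<longleftrightarrow> x \<in> NW n \<or> (\<exists>y. (y, x) \<in> FE n)"
      unfolding FE_Suc_iff NW_iff by auto
    also have "\<dots> \<longleftrightarrow> x \<in> NW n \<union> snd ` FE n" by (simp add: snd_img)
    finally show ?thesis .
  qed
  then show ?thesis by blast
qed

lemma fst_FE_Suc: "fst ` FE (Suc n) = fst ` FE n \<union> NW n"
proof -
  have "x \<in> fst ` FE (Suc n) \<longleftrightarrow> x \<in> fst ` FE n \<union> NW n" for x
  proof -
    have "x \<in> fst ` FE (Suc n) \<longleftrightarrow> (\<exists>y. (x, y) \<in> FE (Suc n))" by (rule fst_img)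
    also have "\<dots> \<longleftrightarrow> x \<in> NW n \<or> (\<exists>y. (x, y) \<in> FE n)"
      unfolding FE_Suc_iff NW_iff by auto
    also have "\<dots> \<longleftrightarrow> x \<in> fst ` FE n \<union> NW n" by (auto simp: fst_img)
    finally show ?thesis .
  qed
  then show ?thesis by blast
qed

lemma snd_FE: "snd ` FE n = Vs n"
proof (induction n)
  case 0
  then show ?case by (auto simp: Vs_def)
next
  case (Suc n)
  have "fst ` FE n \<subseteq> snd ` FE n" using Suc.IH unfolding Vs_def by blast
  then show ?case unfolding Vs_def snd_FE_Suc fst_FE_Suc by blast
qed

lemma Vs_Suc: "Vs (Suc n) = Vs n \<union> NW n"
proof -
  have "Vs (Suc n) = snd ` FE (Suc n)" by (rule snd_FE[symmetric])
  also have "\<dots> = NW n \<union> snd ` FE n" by (rule snd_FE_Suc)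
  also have "\<dots> = NW n \<union> Vs n" by (simp only: snd_FE)
  finally show ?thesis by blast
qed

lemma NW_depth: "x \<in> NW n \<Longrightarrow> depth x = Suc n"
  unfolding NW_iff using FE_depth by auto

lemma finite_FE: "finite (FE n)"
  by (induction n) (auto simp: FE_Suc_split)

lemma card_FE: "card (FE n) = 4 ^ (n + 1)"
proof (induction n)
  case 0
  then show ?case by (simp add: numeral_eq_Suc)
next
  case (Suc n)
  let ?A = "fA ` (FE n \<times> (UNIV::bool set))"
  let ?B = "fB ` (FE n \<times> (UNIV::bool set))"
  have fin: "finite (FE n \<times> (UNIV::bool set))" using finite_FE by auto
  have iA: "inj fA"
  proof (rule injI)
    fix p q assume h: "fA p = fA q"
    obtain u v b where p: "p = ((u,v),b)" by (metis prod.exhaust)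
    obtain u' v' b' where q: "q = ((u',v'),b')" by (metis prod.exhaust)
    show "p = q" using h unfolding p q by simp
  qed
  have iB: "inj fB"
  proof (rule injI)
    fix p q assume h: "fB p = fB q"
    obtain u v b where p: "p = ((u,v),b)" by (metis prod.exhaust)
    obtain u' v' b' where q: "q = ((u',v'),b')" by (metis prod.exhaust)
    show "p = q" using h unfolding p q by simp
  qed
  have cA: "card ?A = 2 * card (FE n)"
  proof -
    have "card ?A = card (FE n \<times> (UNIV::bool set))"
      by (rule card_image) (rule inj_on_subset[OF iA], simp)
    also have "\<dots> = 2 * card (FE n)" by (simp add: card_cartesian_product)
    finally show ?thesis .
  qed
  have cB: "card ?B = 2 * card (FE n)"
  proof -
    have "card ?B = card (FE n \<times> (UNIV::bool set))"
      by (rule card_image) (rule inj_on_subset[OF iB], simp)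
    also have "\<dots> = 2 * card (FE n)" by (simp add: card_cartesian_product)
    finally show ?thesis .
  qed
  have disj: "?A \<inter> ?B = {}"
  proof (rule ccontr)
    assume "?A \<inter> ?B \<noteq> {}"
    then obtain p q where pq: "p \<in> FE n \<times> UNIV" "q \<in> FE n \<times> UNIV" "fA p = fB q" by auto
    obtain u v b where p: "p = ((u,v),b)" by (metis prod.exhaust)
    obtain u' v' b' where q: "q = ((u',v'),b')" by (metis prod.exhaust)
    have e: "(u, v) \<in> FE n" "(u', v') \<in> FE n" "u = W u' v' b'" using pq p q by auto
    have "depth u \<le> n" using FE_depth[OF e(1)] by auto
    moreover have "depth u = Suc n" using e(3) FE_depth[OF e(2)] by simp
    ultimately show False by simp
  qed
  have "card (FE (Suc n)) = card ?A + card ?B"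
    unfolding FE_Suc_split using fin disj by (simp add: card_Un_disjoint)
  then show ?case using cA cB Suc by simp
qed

lemma card_NW: "card (NW n) = 2 * 4 ^ (n + 1)"
proof -
  have iN: "inj fN"
  proof (rule injI)
    fix p q assume h: "fN p = fN q"
    obtain u v b where p: "p = ((u,v),b)" by (metis prod.exhaust)
    obtain u' v' b' where q: "q = ((u',v'),b')" by (metis prod.exhaust)
    show "p = q" using h unfolding p q by simp
  qed
  have "card (NW n) = card (FE n \<times> (UNIV::bool set))" unfolding NW_def
    by (rule card_image) (rule inj_on_subset[OF iN], simp)
  also have "\<dots> = 2 * card (FE n)" by (simp add: card_cartesian_product)
  finally show ?thesis by (simp add: card_FE)
qed

lemma finite_Vs: "finite (Vs n)"
  unfolding Vs_def using finite_FE by auto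

lemma finite_NW: "finite (NW n)"
  unfolding NW_def using finite_FE by auto

lemma card_Vs: "3 * card (Vs n) = 8 * 4 ^ n + 4"
proof (induction n)
  case 0
  have "Vs 0 = {V 0, V 1, V 2, V 3}" by (auto simp: Vs_def)
  then show ?case by simp
next
  case (Suc n)
  have d: "Vs n \<inter> NW n = {}" using Vs_depth NW_depth by fastforce
  have "card (Vs (Suc n)) = card (Vs n) + card (NW n)"
    unfolding Vs_Suc using d finite_Vs finite_NW by (simp add: card_Un_disjoint)
  then show ?case using Suc card_NW by simp
qed


lemma matching_upper:
  assumes "is_matching E M" "finite S" "\<And>e. e \<in> E \<Longrightarrow> \<exists>x\<in>e. x \<in> S"
  shows "card M \<le> card S"
proof -
  define f where "f e = (SOME x. x \<in> e \<and> x \<in> S)" for e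
  have M: "M \<subseteq> E" using assms(1) by (auto simp: is_matching_def)
  have fe: "f e \<in> e \<and> f e \<in> S" if "e \<in> M" for e
    unfolding f_def using assms(3) M that by (metis (no_types, lifting) someI_ex subsetD)
  have "inj_on f M"
  proof (rule inj_onI)
    fix a b assume ab: "a \<in> M" "b \<in> M" "f a = f b"
    then have "f a \<in> a \<inter> b" using fe[OF ab(1)] fe[OF ab(2)] by simp
    then show "a = b" using assms(1) ab by (auto simp: is_matching_def)
  qed
  moreover have "f ` M \<subseteq> S" using fe by auto
  ultimately show ?thesis using card_inj_on_le assms(2) by blast
qed

lemma mn_eq:
  assumes "is_matching E M0" "card M0 = N" "\<And>M. is_matching E M \<Longrightarrow> card M \<le> N"
  shows "matching_number E = N"
  unfolding matching_number_def
proof (rule Max_eqI)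
  show "finite (card ` {M. is_matching E M})"
    by (rule finite_subset[of _ "{..N}"]) (use assms(3) in auto)
qed (use assms in auto)

lemma case1: "matching_number (F 1) = 2"
proof (rule mn_eq)
  have E: "F 1 = {{V 0, V 1}, {V 1, V 2}, {V 2, V 3}, {V 3, V 0}}"
    by (auto simp: F_def)
  show "is_matching (F 1) {{V 0, V 1}, {V 2, V 3}}"
    unfolding is_matching_def E by auto
  show "card {{V 0, V 1}, {V 2, V 3}} = 2" by (simp add: doubleton_eq_iff)
  fix M assume "is_matching (F 1) M"
  then have "card M \<le> card {V 0, V 2}"
  proof (rule matching_upper)
    fix e assume "e \<in> F 1" then show "\<exists>x\<in>e. x \<in> {V 0, V 2}" unfolding E by auto
  qed simp
  then show "card M \<le> 2" by simp
qed

lemma case2: "matching_number (F (Suc (Suc n))) = card (Vs n)"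
proof (rule mn_eq)
  have E: "F (Suc (Suc n)) = (\<lambda>(u, v). {u, v}) ` FE (Suc n)" by (simp add: F_def)
  define pu where "pu v = (SOME u. (u, v) \<in> FE n)" for v
  have pu: "(pu v, v) \<in> FE n" if "v \<in> Vs n" for v
  proof -
    have "\<exists>u. (u, v) \<in> FE n" using that snd_FE[of n] snd_img[of v "FE n"] by blast
    then show ?thesis unfolding pu_def by (rule someI_ex)
  qed
  have dw: "depth (W (pu v) v False) = Suc n" if "v \<in> Vs n" for v
    using FE_depth[OF pu[OF that]] by simp
  define g where "g v = {v, W (pu v) v False}" for v
  let ?M = "g ` Vs n"
  have inj: "inj_on g (Vs n)"
  proof (rule inj_onI)
    fix a b assume ab: "a \<in> Vs n" "b \<in> Vs n" "g a = g b"
    then have "a \<in> g b" unfolding g_def by auto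
    moreover have "a \<noteq> W (pu b) b False" using dw[OF ab(2)] Vs_depth[OF ab(1)] by auto
    ultimately show "a = b" unfolding g_def by auto
  qed
  show "is_matching (F (Suc (Suc n))) ?M"
    unfolding is_matching_def
  proof (intro conjI ballI impI)
    show "?M \<subseteq> F (Suc (Suc n))"
    proof
      fix e assume "e \<in> ?M"
      then obtain v where v: "v \<in> Vs n" "e = g v" by auto
      have "(W (pu v) v False, v) \<in> FE (Suc n)" using pu[OF v(1)] unfolding FE_Suc_iff by blast
      then have "{W (pu v) v False, v} \<in> F (Suc (Suc n))" unfolding E
        by (rule image_eqI[rotated]) simp
      then show "e \<in> F (Suc (Suc n))" using v by (simp add: g_def insert_commute)
    qed
  next
    fix e1 e2 assume e: "e1 \<in> ?M" "e2 \<in> ?M" "e1 \<noteq> e2"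
    then obtain a b where ab: "a \<in> Vs n" "b \<in> Vs n" "e1 = g a" "e2 = g b" by auto
    then have "a \<noteq> b" using e by auto
    moreover have "a \<noteq> W (pu b) b False" using dw[OF ab(2)] Vs_depth[OF ab(1)] by auto
    moreover have "b \<noteq> W (pu a) a False" using dw[OF ab(1)] Vs_depth[OF ab(2)] by auto
    ultimately show "e1 \<inter> e2 = {}" using ab unfolding g_def by auto
  qed
  show "card ?M = card (Vs n)" using inj by (simp add: card_image)
  fix M assume "is_matching (F (Suc (Suc n))) M"
  then show "card M \<le> card (Vs n)"
  proof (rule matching_upper)
    show "finite (Vs n)" by (rule finite_Vs)
    fix e assume "e \<in> F (Suc (Suc n))"
    then obtain p where p: "p \<in> FE (Suc n)" "e = (\<lambda>(u, v). {u, v}) p" unfolding E by blast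
    obtain a b where pab: "p = (a, b)" by (metis prod.exhaust)
    have ab: "(a, b) \<in> FE (Suc n)" "e = {a, b}" using p pab by auto
    from ab(1) obtain u v c where uvc: "(u,v) \<in> FE n" "(a,b) = (u, W u v c) \<or> (a,b) = (W u v c, v)"
      unfolding FE_Suc_iff by blast
    then have "a \<in> Vs n \<or> b \<in> Vs n" unfolding Vs_iff by blast
    then show "\<exists>x\<in>e. x \<in> Vs n" using ab by auto
  qed
qed

theorem theorem1:
  fixes g :: nat
  assumes "g \<ge> 1"
  shows "real (matching_number (F g)) = (4 ^ g + 8) / 6"
proof (cases "g = 1")
  case True
  then show ?thesis using case1 by simp
next
  case False
  then obtain n where g: "g = Suc (Suc n)" using assms
    by (metis One_nat_def Suc_le_D Suc_le_lessD less_Suc_eq_0_disj le_SucE)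
  have "real (3 * card (Vs n)) = real (8 * 4 ^ n + 4)" using card_Vs by metis
  then have "3 * real (card (Vs n)) = 8 * 4 ^ n + 4" by simp
  then show ?thesis unfolding g case2 by (simp add: field_simps)
qed

end
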